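(* Let $\mathcal T$ be a graftable class of rooted trees satisfying $T(x)=x\Phi(T(x))$ for some power series $\Phi$ with $\Phi(0)\ne0$. For an integer $k\ge 1$ let $$D_k(x)=\sum_{T\in\mathcal T}\ \sum_{v\in T} d(v,r(T))^k\,x^{|T|}.$$ Then $D_k(x)=(V(x)-T(x))\,P_k\!\left(\frac{L(x)}{x}\right)$. Here $P_k$ is the polynomial defined in the context, and it has the form $$P_k(t)=k!\,t^k-\frac{k!\,(k-1)}{2}\,t^{k-1}+Q_k(t),$$ where $Q_k$ is a polynomial of degree at most $k-2$ if $k\ge2$ and $Q_1=0$.
   Context: All trees are rooted; $|T|$ is the number of vertices, $r(T)$ is the root, and $d(u,w)$ is the number of edges of the path between vertices $u$ and $w$. A leaf is a vertex with no children. A class $\mathcal T$ of (unlabelled) rooted trees, possibly carrying extra structure such as an ordering of children or a left/right designation of children, is graftable if the following hold. First, for every $T\in\mathcal T$ and every vertex $v$, both the subtree rooted at $v$ and the tree obtained from $T$ by deleting all proper descendants of $v$ lie in $\mathcal T$, and in the latter tree $v$ is a leaf. Second, identifying any leaf of any $S\in\mathcal T$ with the root of any $U\in\mathcal T$ gives a tree in $\mathcal T$. The generating functions are $T(x)=\sum_{T\in\mathcal T}x^{|T|}$, $V(x)=\sum_{T\in\mathcal T}|T|x^{|T|}$ and $L(x)=\sum_{T\in\mathcal T}(\#\text{leaves of }T)x^{|T|}$. Definition of $P_k$: write $\binom{m+k-1}{k}=\sum_{j=0}^{k}b_{k,j}m^j$ as a polynomial in $m$, so that $b_{k,0}=0$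 for $k\ge1$. Define polynomials $P_1,P_2,\dots$ recursively by the identity $t^k=\sum_{j=1}^k b_{k,j}P_j(t)$ for all $k\ge1$. In particular $P_1(t)=t$ and $P_2(t)=2t^2-t$. *)

theory Defs
  imports "HOL-Computational_Algebra.Computational_Algebra"
begin

text \<open>Rooted trees with extra structure: each vertex has an ordered list of children,
  and each child edge carries a label of type 'a (e.g. left/right designation).\<close>

datatype 'a tree = Node "('a \<times> 'a tree) list"

text \<open>Multiset (as a list) of depths d(v, r(T)) of all vertices v of T.\<close>
primrec depths :: "'a tree \<Rightarrow> nat list" where
  "depths (Node cs) = 0 # concat (map (\<lambda>p. map Suc (snd p)) (map (map_prod id depths) cs))"

definition tsize :: "'a tree \<Rightarrow> nat" where
  "tsize T = length (depths T)"

primrec nleaves :: "'a tree \<Rightarrow> nat" where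
  "nleaves (Node cs) = (if cs = [] then 1 else sum_list (map snd (map (map_prod id nleaves) cs)))"

inductive is_subtree :: "'a tree \<Rightarrow> 'a tree \<Rightarrow> bool" where
  self: "is_subtree T T"
| child: "(a, c) \<in> set cs \<Longrightarrow> is_subtree S c \<Longrightarrow> is_subtree S (Node cs)"

inductive pruned :: "'a tree \<Rightarrow> 'a tree \<Rightarrow> bool" where
  here: "pruned (Node cs) (Node [])"
| down: "i < length cs \<Longrightarrow> cs ! i = (a, c) \<Longrightarrow> pruned c c' \<Longrightarrow>
           pruned (Node cs) (Node (cs[i := (a, c')]))"

inductive grafted :: "'a tree \<Rightarrow> 'a tree \<Rightarrow> 'a tree \<Rightarrow> bool" where
  leaf: "grafted (Node []) U U"
| down: "i < length cs \<Longrightarrow> cs ! i = (a, c) \<Longrightarrow> grafted c U c' \<Longrightarrow>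
           grafted (Node cs) U (Node (cs[i := (a, c')]))"

definition graftable :: "'a tree set \<Rightarrow> bool" where
  "graftable \<T> \<longleftrightarrow>
     (\<forall>T\<in>\<T>. \<forall>S. is_subtree S T \<longrightarrow> S \<in> \<T>) \<and>
     (\<forall>T\<in>\<T>. \<forall>T'. pruned T T' \<longrightarrow> T' \<in> \<T>) \<and>
     (\<forall>S\<in>\<T>. \<forall>U\<in>\<T>. \<forall>R. grafted S U R \<longrightarrow> R \<in> \<T>)"

definition tree_gf :: "'a tree set \<Rightarrow> ('a tree \<Rightarrow> real) \<Rightarrow> real fps" where
  "tree_gf \<T> w = Abs_fps (\<lambda>n. \<Sum>T\<in>{T\<in>\<T>. tsize T = n}. w T)"

text \<open>binom(m+k-1,k) as a polynomial in m; b k j is its j-th coefficient.\<close>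
definition binpoly :: "nat \<Rightarrow> real poly" where
  "binpoly k = smult (1 / fact k) (\<Prod>i<k. [:of_nat i, 1:])"

definition bcoef :: "nat \<Rightarrow> nat \<Rightarrow> real" where
  "bcoef k j = coeff (binpoly k) j"

text \<open>P_k determined recursively by t^k = sum_{j=1}^k b_{k,j} P_j(t) (note b_{k,k} = 1/k!).\<close>
function Ppoly :: "nat \<Rightarrow> real poly" where
  "Ppoly k = (if k = 0 then 0 else
     smult (1 / bcoef k k) (monom 1 k - (\<Sum>j\<in>{1..<k}. smult (bcoef k j) (Ppoly j))))"
  by auto
termination
  by (relation "measure id") auto

end

theory Submission
  imports Defs
begin


fun subat :: "'a tree \<Rightarrow> nat list \<Rightarrow> 'a tree option" where
  "subat T [] = Some T"
| "subat (Node cs) (i # p) = (if i < length cs then subat (snd (cs ! i)) p else None)"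

fun graft :: "'a tree \<Rightarrow> nat list \<Rightarrow> 'a tree \<Rightarrow> 'a tree" where
  "graft T [] U = U"
| "graft (Node cs) (i # p) U = (if i < length cs then
      Node (cs[i := (fst (cs ! i), graft (snd (cs ! i)) p U)]) else Node cs)"

definition pos :: "'a tree \<Rightarrow> nat list set" where
  "pos T = {p. subat T p \<noteq> None}"

lemma tsize_Node: "tsize (Node cs) = Suc (sum_list (map (\<lambda>x. tsize (snd x)) cs))"
  by (simp add: tsize_def length_concat comp_def)

lemma at_append: "subat T (p @ q) = Option.bind (subat T p) (\<lambda>V. subat V q)"
proof (induction p arbitrary: T)
  case Nil then show ?case by simp
next
  case (Cons i p) then show ?case by (cases T) auto
qed

lemma at_graft_same: "subat T p \<noteq> None \<Longrightarrow> subat (graft T p U) p = Some U"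
proof (induction p arbitrary: T)
  case Nil then show ?case by simp
next
  case (Cons i p) then show ?case by (cases T) (auto split: if_splits)
qed

lemma graft_graft: "subat T p \<noteq> None \<Longrightarrow> graft (graft T p U) p W = graft T p W"
proof (induction p arbitrary: T)
  case Nil then show ?case by simp
next
  case (Cons i p) then show ?case by (cases T) (auto split: if_splits)
qed

lemma graft_id: "subat T p = Some V \<Longrightarrow> graft T p V = T"
proof (induction p arbitrary: T)
  case Nil then show ?case by simp
next
  case (Cons i p) then show ?case by (cases T) (auto split: if_splits)
qed

lemma sum_list_upd: "i < length xs \<Longrightarrow> sum_list (xs[i:=x]) + xs ! i = sum_list xs + (x::nat)"
proof (induction xs arbitrary: i)
  case Nil then show ?case by simp
next
  case (Cons a xs) then show ?case by (cases i) auto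
qed

lemma sum_list_map_upd: "i < length xs \<Longrightarrow> sum_list (map f (xs[i:=x])) + f (xs ! i) = sum_list (map f xs) + (f x::nat)"
proof (induction xs arbitrary: i)
  case Nil then show ?case by simp
next
  case (Cons a xs) then show ?case by (cases i) auto
qed

lemma tsize_graft: "subat T p = Some V \<Longrightarrow> tsize (graft T p U) + tsize V = tsize T + tsize U"
proof (induction p arbitrary: T)
  case Nil then show ?case by simp
next
  case (Cons i p)
  obtain cs where T: "T = Node cs" by (cases T)
  with Cons.prems have i: "i < length cs" and a: "subat (snd (cs!i)) p = Some V" by (auto split: if_splits)
  have IH: "tsize (graft (snd (cs!i)) p U) + tsize V = tsize (snd (cs!i)) + tsize U"
    using Cons.IH a by blast
  have "sum_list (map (\<lambda>x. tsize (snd x)) (cs[i := (fst (cs ! i), graft (snd (cs ! i)) p U)]))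
        + tsize (snd (cs!i)) = sum_list (map (\<lambda>x. tsize (snd x)) cs) + tsize (graft (snd (cs ! i)) p U)"
    using sum_list_map_upd[OF i, of "\<lambda>x. tsize (snd x)" "(fst (cs ! i), graft (snd (cs ! i)) p U)"]
    unfolding snd_conv .
  moreover have "tsize (graft T (i#p) U) = Suc (sum_list (map (\<lambda>x. tsize (snd x)) (cs[i := (fst (cs ! i), graft (snd (cs ! i)) p U)])))"
    using T i by (simp only: graft.simps if_True tsize_Node)
  moreover have "tsize T = Suc (sum_list (map (\<lambda>x. tsize (snd x)) cs))"
    using T by (simp only: tsize_Node)
  ultimately show ?case using IH by linarith
qed

lemma tsize_pos: "tsize T \<ge> 1"
  by (cases T) (simp add: tsize_def)

lemma sum_list_map_concat: "sum_list (map f (concat xss)) = sum_list (map (\<lambda>xs. sum_list (map f xs)) xss)"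
  by (induction xss) auto

lemma at_len: "subat T p = Some V \<Longrightarrow> length p + tsize V \<le> tsize T"
proof (induction p arbitrary: T)
  case Nil then show ?case by simp
next
  case (Cons i p)
  obtain cs where T: "T = Node cs" by (cases T)
  with Cons.prems have i: "i < length cs" and a: "subat (snd (cs!i)) p = Some V" by (auto split: if_splits)
  have "tsize (snd (cs!i)) \<le> sum_list (map (\<lambda>x. tsize (snd x)) cs)"
    using i nth_mem[OF i] by (intro member_le_sum_list) force+
  moreover have "tsize T = Suc (sum_list (map (\<lambda>x. tsize (snd x)) cs))"
    using T by (simp only: tsize_Node)
  ultimately show ?case using Cons.IH[OF a] by simp
qed

lemma grafted_graft: "subat S p = Some (Node []) \<Longrightarrow> grafted S U (graft S p U)"
proof (induction p arbitrary: S)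
  case Nil then show ?case by (simp add: grafted.leaf)
next
  case (Cons i p)
  obtain cs where T: "S = Node cs" by (cases S)
  with Cons.prems have i: "i < length cs" and a: "subat (snd (cs!i)) p = Some (Node [])" by (auto split: if_splits)
  show ?case using grafted.down[OF i _ Cons.IH[OF a], of "fst (cs!i)"] T i by simp
qed

lemma pruned_graft: "subat S p \<noteq> None \<Longrightarrow> pruned S (graft S p (Node []))"
proof (induction p arbitrary: S)
  case Nil then show ?case by (cases S) (simp add: pruned.here)
next
  case (Cons i p)
  obtain cs where T: "S = Node cs" by (cases S)
  with Cons.prems have i: "i < length cs" and a: "subat (snd (cs!i)) p \<noteq> None" by (auto split: if_splits)
  show ?case using pruned.down[OF i _ Cons.IH[OF a], of "fst (cs!i)"] T i by simp
qed

lemma subtree_at: "subat S p = Some V \<Longrightarrow> is_subtree V S"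
proof (induction p arbitrary: S)
  case Nil then show ?case by (simp add: is_subtree.self)
next
  case (Cons i p)
  obtain cs where T: "S = Node cs" by (cases S)
  with Cons.prems have i: "i < length cs" and a: "subat (snd (cs!i)) p = Some V" by (auto split: if_splits)
  have "(fst (cs!i), snd (cs!i)) \<in> set cs" using i by simp
  then show ?case using is_subtree.child Cons.IH[OF a] T by metis
qed

lemma snd_snds: "snd x \<in> Basic_BNFs.snds x"
  by (cases x) simp

lemma pos_Node: "pos (Node cs) = insert [] (\<Union>i<length cs. (Cons i) ` pos (snd (cs ! i)))"
  unfolding pos_def
  apply (rule set_eqI)
  subgoal for p by (cases p) auto
  done

lemma finite_pos: "finite (pos T)"
proof (induction T)
  case (Node cs)
  have "finite (pos (snd (cs!i)))" if "i<length cs" for i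
    using Node.IH[OF nth_mem[OF that] snd_snds] .
  then show ?case by (simp add: pos_Node)
qed

lemma depths_sum: "sum_list (map f (depths T)) = (\<Sum>p\<in>pos T. (f (length p) :: 'b::comm_monoid_add))"
proof (induction T arbitrary: f)
  case (Node cs)
  have IH: "sum_list (map f (depths (snd (cs!i)))) = (\<Sum>p\<in>pos (snd (cs!i)). (f (length p) :: 'b))"
    if "i < length cs" for i f
    using Node.IH[OF nth_mem[OF that] snd_snds] .
  have fin: "\<And>i. finite (pos (snd (cs!i)))" by (rule finite_pos)
  have nin: "[] \<notin> (\<Union>i<length cs. (Cons i) ` pos (snd (cs ! i)))" by blast
  have "(\<Sum>p\<in>pos (Node cs). f (length p)) = f 0 + (\<Sum>p\<in>(\<Union>i<length cs. (Cons i) ` pos (snd (cs ! i))). f (length p))"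
    unfolding pos_Node using sum.insert[OF _ nin, of "\<lambda>p. f (length p)"] fin by simp
  also have "(\<Sum>p\<in>(\<Union>i<length cs. (Cons i) ` pos (snd (cs ! i))). f (length p))
      = (\<Sum>i<length cs. \<Sum>p\<in>(Cons i) ` pos (snd (cs ! i)). f (length p))"
    by (rule sum.UNION_disjoint) (auto simp: fin)
  also have "\<dots> = (\<Sum>i<length cs. \<Sum>p\<in>pos (snd (cs ! i)). f (Suc (length p)))"
    by (rule sum.cong[OF refl], subst sum.reindex) auto
  also have "\<dots> = (\<Sum>i<length cs. sum_list (map (\<lambda>d. f (Suc d)) (depths (snd (cs!i)))))"
    by (rule sum.cong[OF refl]) (simp add: IH)
  also have "\<dots> = sum_list (map (\<lambda>x. sum_list (map (\<lambda>d. f (Suc d)) (depths (snd x)))) cs)"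
    by (simp add: sum_list_sum_nth atLeast0LessThan)
  finally show ?case
    by (simp add: sum_list_map_concat comp_def)
qed

lemma nleaves_card: "nleaves T = card {p\<in>pos T. subat T p = Some (Node [])}"
proof (induction T)
  case (Node cs)
  have IH: "nleaves (snd (cs!i)) = card {p\<in>pos (snd (cs!i)). subat (snd (cs!i)) p = Some (Node [])}" if "i < length cs" for i
    using Node.IH[OF nth_mem[OF that] snd_snds] .
  have fin: "\<And>i. finite {p\<in>pos (snd (cs!i)). subat (snd (cs!i)) p = Some (Node [])}" by (rule finite_subset[OF _ finite_pos]) auto
  show ?case
  proof (cases "cs = []")
    case True
    have "{p\<in>pos (Node cs). subat (Node cs) p = Some (Node [])} = {[]}"
      using True apply (intro set_eqI)
      subgoal for p by (cases p) (auto simp: pos_def)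
      done
    moreover have "nleaves (Node cs) = 1" using True by simp
    ultimately show ?thesis by (simp only: card.empty card_insert_disjoint finite.emptyI empty_iff) simp
  next
    case False
    have "{p\<in>pos (Node cs). subat (Node cs) p = Some (Node [])}
        = (\<Union>i<length cs. (Cons i) ` {p\<in>pos (snd (cs!i)). subat (snd (cs!i)) p = Some (Node [])})"
      using False apply (intro set_eqI)
      subgoal for p by (cases p) (auto simp: pos_def)
      done
    then have "card {p\<in>pos (Node cs). subat (Node cs) p = Some (Node [])}
       = (\<Sum>i<length cs. card ((Cons i) ` {p\<in>pos (snd (cs!i)). subat (snd (cs!i)) p = Some (Node [])}))"
      apply (simp only:)
      apply (rule card_UN_disjoint)
        apply (rule finite_lessThan)
       apply (rule ballI, rule finite_imageI, rule fin)
      apply blast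
      done
    also have "\<dots> = (\<Sum>i<length cs. nleaves (snd (cs!i)))"
      by (rule sum.cong[OF refl]) (simp add: IH card_image)
    also have "\<dots> = nleaves (Node cs)"
      using False by (simp add: sum_list_sum_nth atLeast0LessThan)
    finally show ?thesis ..
  qed
qed


lemma tsize_leaf: "tsize (Node []) = 1" by (simp add: tsize_def)

lemma graftableD:
  assumes "graftable \<T>"
  shows "T \<in> \<T> \<Longrightarrow> is_subtree S T \<Longrightarrow> S \<in> \<T>"
    and "T \<in> \<T> \<Longrightarrow> pruned T T' \<Longrightarrow> T' \<in> \<T>"
    and "S \<in> \<T> \<Longrightarrow> U \<in> \<T> \<Longrightarrow> grafted S U R \<Longrightarrow> R \<in> \<T>"
  using assms unfolding graftable_def by blast+

lemma bij_aux1: "subat S p = Some (Node []) \<Longrightarrow> length p = d \<Longrightarrow>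
  graft (graft S p U) (take d (p@q)) (Node []) = S \<and> take d (p@q) = p \<and>
  the (subat (graft S p U) (take d (p@q))) = U \<and> drop d (p@q) = q"
  by (simp add: graft_graft graft_id at_graft_same)

lemma pos_split: "r \<in> pos R \<Longrightarrow> \<exists>V. subat R (take d r) = Some V \<and> drop d r \<in> pos V"
proof -
  assume "r \<in> pos R"
  then have "subat R (take d r @ drop d r) \<noteq> None" by (simp add: pos_def)
  then have "Option.bind (subat R (take d r)) (\<lambda>V. subat V (drop d r)) \<noteq> None"
    unfolding at_append .
  then show ?thesis by (cases "subat R (take d r)") (simp_all add: pos_def)
qed

lemma bij_aux2: "r \<in> pos R \<Longrightarrow>
  graft (graft R (take d r) (Node [])) (take d r) (the (subat R (take d r))) = R"
  using pos_split[of r R d] by (auto simp: graft_graft graft_id)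

lemma bij_aux3:
  assumes g: "graftable \<T>" and a: "S \<in> \<T>" "U \<in> \<T>" "tsize S + tsize U = Suc m" "length p = d"
      "subat S p = Some (Node [])" "q \<in> pos U" "Pm U q"
  shows "graft S p U \<in> \<T> \<and> tsize (graft S p U) = m \<and> p @ q \<in> pos (graft S p U) \<and>
       d \<le> length (p @ q) \<and> Pm (the (subat (graft S p U) (take d (p @ q)))) (drop d (p @ q))"
proof -
    have R: "graft S p U \<in> \<T>" using graftableD(3)[OF g a(1,2) grafted_graft[OF a(5)]] .
    have sz: "tsize (graft S p U) + 1 = tsize S + tsize U"
      using tsize_graft[OF a(5), of U] by (simp add: tsize_leaf)
    have at: "subat (graft S p U) p = Some U" by (rule at_graft_same) (simp add: a(5))
    have "p @ q \<in> pos (graft S p U)" using at a(6) by (simp add: pos_def at_append)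
    then show ?thesis
      using R sz a at by (simp add: tsize_leaf)
qed

lemma bij_aux4:
  assumes g: "graftable \<T>" and a: "R \<in> \<T>" "tsize R = m" "r \<in> pos R" "d \<le> length r" "Pm (the (subat R (take d r))) (drop d r)"
  shows "graft R (take d r) (Node []) \<in> \<T> \<and> the (subat R (take d r)) \<in> \<T> \<and>
       tsize (graft R (take d r) (Node [])) + tsize (the (subat R (take d r))) = Suc m \<and>
       take d r \<in> pos (graft R (take d r) (Node [])) \<and> length (take d r) = d \<and>
       subat (graft R (take d r) (Node [])) (take d r) = Some (Node []) \<and>
       drop d r \<in> pos (the (subat R (take d r))) \<and> Pm (the (subat R (take d r))) (drop d r)"
proof -
    obtain V where V: "subat R (take d r) = Some V" and q: "drop d r \<in> pos V"
      using pos_split[OF a(3)] by blast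
    have S: "graft R (take d r) (Node []) \<in> \<T>"
      using graftableD(2)[OF g a(1) pruned_graft] V by simp
    have U: "V \<in> \<T>" using graftableD(1)[OF g a(1) subtree_at[OF V]] .
    have sz: "tsize (graft R (take d r) (Node [])) + tsize V = tsize R + 1"
      using tsize_graft[OF V, of "Node []"] by (simp add: tsize_leaf)
    have at: "subat (graft R (take d r) (Node [])) (take d r) = Some (Node [])"
      by (rule at_graft_same) (simp add: V)
    show ?thesis
      using S U sz at V q a by (simp add: pos_def tsize_leaf)
qed

lemma graft_bij:
  assumes g: "graftable \<T>"
  shows "bij_betw (\<lambda>((S,p),(U,q)). (graft S p U, p @ q))
    {((S,p),(U,q)). S \<in> \<T> \<and> U \<in> \<T> \<and> tsize S + tsize U = Suc m \<and> p \<in> pos S \<and> length p = d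
        \<and> subat S p = Some (Node []) \<and> q \<in> pos U \<and> Pm U q}
    {(R,r). R \<in> \<T> \<and> tsize R = m \<and> r \<in> pos R \<and> d \<le> length r \<and> Pm (the (subat R (take d r))) (drop d r)}"
  apply (rule bij_betw_byWitness[where f' = "\<lambda>(R,r). ((graft R (take d r) (Node []), take d r), (the (subat R (take d r)), drop d r))"])
  subgoal using bij_aux1 by fastforce
  subgoal using bij_aux2 pos_split by fastforce
  subgoal using bij_aux3[OF g] by fastforce
  subgoal using bij_aux4[OF g] by fastforce
  done


lemma tsize_ne0: "tsize T \<noteq> 0"
  using tsize_pos[of T] by simp

lemma gf_card:
  assumes fin: "\<And>n. finite {T\<in>\<T>. tsize T = n}" and finM: "\<And>T. finite (M T)"
  shows "tree_gf \<T> (\<lambda>T. real (card (M T))) $ n = real (card (SIGMA T:{T\<in>\<T>. tsize T = n}. M T))"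
  unfolding tree_gf_def using fin finM by (simp add: card_SigmaI)

lemma gf_mult_card:
  assumes fin: "\<And>n. finite {T\<in>\<T>. tsize T = n}" and finM1: "\<And>T. finite (M1 T)" and finM2: "\<And>T. finite (M2 T)"
  shows "(tree_gf \<T> (\<lambda>T. real (card (M1 T))) * tree_gf \<T> (\<lambda>T. real (card (M2 T)))) $ n
     = real (card {(x,y). x \<in> Sigma \<T> M1 \<and> y \<in> Sigma \<T> M2 \<and> tsize (fst x) + tsize (fst y) = n})"
proof -
  define A where "A i = (SIGMA T:{T\<in>\<T>. tsize T = i}. M1 T)" for i
  define B where "B i = (SIGMA T:{T\<in>\<T>. tsize T = i}. M2 T)" for i
  have fA: "finite (A i)" for i unfolding A_def using fin finM1 by (intro finite_SigmaI)
  have fB: "finite (B i)" for i unfolding B_def using fin finM2 by (intro finite_SigmaI)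
  have "(tree_gf \<T> (\<lambda>T. real (card (M1 T))) * tree_gf \<T> (\<lambda>T. real (card (M2 T)))) $ n
      = (\<Sum>i=0..n. real (card (A i)) * real (card (B (n - i))))"
    unfolding fps_mult_nth A_def B_def using gf_card[OF fin finM1] gf_card[OF fin finM2] by simp
  also have "\<dots> = real (\<Sum>i=0..n. card (A i \<times> B (n - i)))"
    by (simp add: card_cartesian_product)
  also have "(\<Sum>i=0..n. card (A i \<times> B (n - i))) = card (\<Union>i\<in>{0..n}. A i \<times> B (n - i))"
    apply (rule card_UN_disjoint[symmetric])
      apply simp
     apply (simp add: fA fB)
    apply (auto simp: A_def B_def)
    done
  also have "(\<Union>i\<in>{0..n}. A i \<times> B (n - i)) = {(x,y). x \<in> Sigma \<T> M1 \<and> y \<in> Sigma \<T> M2 \<and> tsize (fst x) + tsize (fst y) = n}"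
    by (auto simp: A_def B_def)
  finally show ?thesis .
qed

lemma finite_pos_sub: "finite {p\<in>pos T. P p}"
  by (rule finite_subset[OF _ finite_pos]) auto

lemma graft_gf:
  assumes g: "graftable \<T>" and fin: "\<And>n. finite {T\<in>\<T>. tsize T = n}"
  shows "fps_X * tree_gf \<T> (\<lambda>R. real (card {r\<in>pos R. d \<le> length r \<and> Pm (the (subat R (take d r))) (drop d r)}))
   = tree_gf \<T> (\<lambda>S. real (card {p\<in>pos S. length p = d \<and> subat S p = Some (Node [])}))
     * tree_gf \<T> (\<lambda>U. real (card {q\<in>pos U. Pm U q}))"
proof (rule fps_ext)
  fix n
  show "(fps_X * tree_gf \<T> (\<lambda>R. real (card {r\<in>pos R. d \<le> length r \<and> Pm (the (subat R (take d r))) (drop d r)}))) $ n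
   = (tree_gf \<T> (\<lambda>S. real (card {p\<in>pos S. length p = d \<and> subat S p = Some (Node [])}))
     * tree_gf \<T> (\<lambda>U. real (card {q\<in>pos U. Pm U q}))) $ n"
  proof (cases n)
    case 0
    have "{(x,y). x \<in> Sigma \<T> (\<lambda>S. {p\<in>pos S. length p = d \<and> subat S p = Some (Node [])})
       \<and> y \<in> Sigma \<T> (\<lambda>U. {q\<in>pos U. Pm U q}) \<and> tsize (fst x) + tsize (fst y) = 0} = {}"
      using tsize_ne0 by auto
    moreover have "(tree_gf \<T> (\<lambda>S. real (card {p\<in>pos S. length p = d \<and> subat S p = Some (Node [])}))
     * tree_gf \<T> (\<lambda>U. real (card {q\<in>pos U. Pm U q}))) $ 0 = real (card {(x,y). x \<in> Sigma \<T> (\<lambda>S. {p\<in>pos S. length p = d \<and> subat S p = Some (Node [])})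
       \<and> y \<in> Sigma \<T> (\<lambda>U. {q\<in>pos U. Pm U q}) \<and> tsize (fst x) + tsize (fst y) = 0})"
      by (rule gf_mult_card[OF fin finite_pos_sub finite_pos_sub])
    ultimately have "(tree_gf \<T> (\<lambda>S. real (card {p\<in>pos S. length p = d \<and> subat S p = Some (Node [])}))
     * tree_gf \<T> (\<lambda>U. real (card {q\<in>pos U. Pm U q}))) $ 0 = 0"
      by (simp only: card.empty of_nat_0)
    then show ?thesis using 0 by simp
  next
    case (Suc m)
    have "(fps_X * tree_gf \<T> (\<lambda>R. real (card {r\<in>pos R. d \<le> length r \<and> Pm (the (subat R (take d r))) (drop d r)}))) $ n
      = real (card (SIGMA R:{R\<in>\<T>. tsize R = m}. {r\<in>pos R. d \<le> length r \<and> Pm (the (subat R (take d r))) (drop d r)}))"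
      using Suc by (simp add: gf_card[OF fin finite_pos_sub])
    also have "(SIGMA R:{R\<in>\<T>. tsize R = m}. {r\<in>pos R. d \<le> length r \<and> Pm (the (subat R (take d r))) (drop d r)})
      = {(R,r). R \<in> \<T> \<and> tsize R = m \<and> r \<in> pos R \<and> d \<le> length r \<and> Pm (the (subat R (take d r))) (drop d r)}"
      by auto
    also have "card \<dots> = card {((S,p),(U,q)). S \<in> \<T> \<and> U \<in> \<T> \<and> tsize S + tsize U = Suc m \<and> p \<in> pos S \<and> length p = d
        \<and> subat S p = Some (Node []) \<and> q \<in> pos U \<and> Pm U q}"
      using bij_betw_same_card[OF graft_bij[OF g, of m d Pm]] by simp
    also have "{((S,p),(U,q)). S \<in> \<T> \<and> U \<in> \<T> \<and> tsize S + tsize U = Suc m \<and> p \<in> pos S \<and> length p = d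
        \<and> subat S p = Some (Node []) \<and> q \<in> pos U \<and> Pm U q}
      = {(x,y). x \<in> Sigma \<T> (\<lambda>S. {p\<in>pos S. length p = d \<and> subat S p = Some (Node [])})
       \<and> y \<in> Sigma \<T> (\<lambda>U. {q\<in>pos U. Pm U q}) \<and> tsize (fst x) + tsize (fst y) = n}"
      using Suc by auto
    finally show ?thesis
      by (subst gf_mult_card[OF fin finite_pos_sub finite_pos_sub])
  qed
qed


definition Agf :: "'a tree set \<Rightarrow> nat \<Rightarrow> real fps" where
  "Agf \<T> d = tree_gf \<T> (\<lambda>T. real (card {p\<in>pos T. length p = d}))"
definition Bgf :: "'a tree set \<Rightarrow> nat \<Rightarrow> real fps" where
  "Bgf \<T> d = tree_gf \<T> (\<lambda>T. real (card {p\<in>pos T. length p = d \<and> subat T p = Some (Node [])}))"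

lemma fps_X_cancel: "fps_X * a = fps_X * (b :: real fps) \<Longrightarrow> a = b"
proof (rule fps_ext)
  fix n assume "fps_X * a = fps_X * b"
  then have "(fps_X * a) $ Suc n = (fps_X * b) $ Suc n" by simp
  then show "a $ n = b $ n" by simp
qed

lemma tree_gf_0: "tree_gf \<T> w $ 0 = 0"
proof -
  have E: "{T\<in>\<T>. tsize T = 0} = {}" using tsize_ne0 by auto
  show ?thesis unfolding tree_gf_def fps_nth_Abs_fps E sum.empty ..
qed

lemma card_root: "card {q\<in>pos U. q = []} = 1"
proof -
  have "{q\<in>pos U. q = []} = {[]}" by (auto simp: pos_def)
  then show ?thesis by simp
qed

context
  fixes \<T> :: "'a tree set"
  assumes g: "graftable \<T>" and fin: "\<And>n. finite {T\<in>\<T>. tsize T = n}" and leaf: "Node [] \<in> \<T>"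
begin

lemma K1: "fps_X * Agf \<T> d = Bgf \<T> d * tree_gf \<T> (\<lambda>_. 1)"
proof -
  have e1: "{r\<in>pos R. d \<le> length r \<and> drop d r = []} = {p\<in>pos R. length p = d}" for R :: "'a tree"
    by auto
  show ?thesis
    using graft_gf[OF g fin, of d "\<lambda>U q. q = []"]
    unfolding Agf_def Bgf_def e1 card_root by simp
qed

lemma K2: "fps_X * Bgf \<T> (d + e) = Bgf \<T> d * Bgf \<T> e"
proof -
  have e1: "{r\<in>pos R. d \<le> length r \<and> (length (drop d r) = e \<and> subat (the (subat R (take d r))) (drop d r) = Some (Node []))}
     = {p\<in>pos R. length p = d + e \<and> subat R p = Some (Node [])}" for R :: "'a tree"
  proof (intro set_eqI iffI)
    fix r assume r: "r \<in> {r\<in>pos R. d \<le> length r \<and> (length (drop d r) = e \<and> subat (the (subat R (take d r))) (drop d r) = Some (Node []))}"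
    then obtain V where V: "subat R (take d r) = Some V" using pos_split by blast
    have "subat R (take d r @ drop d r) = Some (Node [])" using r V by (simp only: at_append) simp
    moreover have "d \<le> length r" "length r - d = e" using r by auto
    then have "length r = d + e" by arith
    ultimately show "r \<in> {p\<in>pos R. length p = d + e \<and> subat R p = Some (Node [])}" using r by simp
  next
    fix r assume r: "r \<in> {p\<in>pos R. length p = d + e \<and> subat R p = Some (Node [])}"
    then obtain V where V: "subat R (take d r) = Some V" using pos_split by blast
    have "subat R (take d r @ drop d r) = Some (Node [])" using r by simp
    then have "subat V (drop d r) = Some (Node [])" using V by (simp only: at_append) simp
    then show "r \<in> {r\<in>pos R. d \<le> length r \<and> (length (drop d r) = e \<and> subat (the (subat R (take d r))) (drop d r) = Some (Node []))}"
      using r V by simp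
  qed
  show ?thesis
    using graft_gf[OF g fin, of d "\<lambda>U q. length q = e \<and> subat U q = Some (Node [])"]
    unfolding Agf_def Bgf_def e1 by simp
qed

lemma K3: "Bgf \<T> 0 = fps_X"
proof (rule fps_ext)
  fix n
  have c: "real (card {p\<in>pos T. length p = 0 \<and> subat T p = Some (Node [])}) = (if T = Node [] then 1 else 0)" for T :: "'a tree"
  proof -
    have "{p\<in>pos T. length p = 0 \<and> subat T p = Some (Node [])} = (if T = Node [] then {[]} else {})"
      by (auto simp: pos_def)
    then show ?thesis by simp
  qed
  have "Bgf \<T> 0 $ n = (\<Sum>T\<in>{T\<in>\<T>. tsize T = n}. (if T = Node [] then 1 else 0))"
    unfolding Bgf_def tree_gf_def c by simp
  also have "\<dots> = (if n = 1 then 1 else 0)"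
  proof (cases "n = 1")
    case True
    then have "Node [] \<in> {T\<in>\<T>. tsize T = n}" using leaf tsize_leaf by simp
    then show ?thesis using True fin[of n] by (simp add: sum.delta')
  next
    case False
    then have "Node [] \<notin> {T\<in>\<T>. tsize T = n}" using tsize_leaf by auto
    then show ?thesis using False fin[of n] by (simp add: sum.delta')
  qed
  finally show "Bgf \<T> 0 $ n = fps_X $ n" by (simp add: fps_X_def)
qed

definition "uu = fps_shift 1 (Bgf \<T> 1)"

lemma B1: "Bgf \<T> 1 = fps_X * uu"
  unfolding uu_def by (rule fps_ext) (simp add: Bgf_def tree_gf_0 fps_X_mult_nth)

lemma uu0: "uu $ 0 = 0"
proof -
  have "(fps_X * uu) $ 1 = Bgf \<T> 1 $ 1" using B1 by simp
  moreover have "Bgf \<T> 1 $ 1 = 0"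
  proof -
    have "\<And>T. T \<in> {T\<in>\<T>. tsize T = 1} \<Longrightarrow> card {p\<in>pos T. length p = 1 \<and> subat T p = Some (Node [])} = 0"
    proof -
      fix T :: "'a tree" assume "T \<in> {T\<in>\<T>. tsize T = 1}"
      then have "tsize T = 1" by simp
      have "\<forall>p\<in>pos T. length p = 0"
      proof
        fix p assume "p \<in> pos T"
        then obtain V where V: "subat T p = Some V" by (auto simp: pos_def)
        from at_len[OF V] tsize_pos[of V] \<open>tsize T = 1\<close> show "length p = 0" by linarith
      qed
      then have "{p\<in>pos T. length p = 1 \<and> subat T p = Some (Node [])} = {}" by fastforce
      then show "card {p\<in>pos T. length p = 1 \<and> subat T p = Some (Node [])} = 0" by (simp only: card.empty)
    qed
    then show ?thesis unfolding Bgf_def tree_gf_def by simp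
  qed
  ultimately show ?thesis by simp
qed

lemma Bform: "Bgf \<T> e = fps_X * uu ^ e"
proof (induction e)
  case 0 then show ?case using K3 by simp
next
  case (Suc e)
  have "fps_X * Bgf \<T> (Suc e) = Bgf \<T> 1 * Bgf \<T> e" using K2[of 1 e] by simp
  also have "\<dots> = fps_X * (fps_X * uu ^ Suc e)" using B1 Suc by (simp add: algebra_simps)
  finally show ?case by (rule fps_X_cancel)
qed

lemma Aform: "Agf \<T> d = tree_gf \<T> (\<lambda>_. 1) * uu ^ d"
proof -
  have "fps_X * Agf \<T> d = fps_X * (tree_gf \<T> (\<lambda>_. 1) * uu ^ d)"
    using K1[of d] Bform[of d] by (simp add: algebra_simps)
  then show ?thesis by (rule fps_X_cancel)
qed

end


lemma group_len:
  assumes "finite P" "\<forall>p\<in>P. length p \<le> n"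
  shows "(\<Sum>p\<in>P. (g (length p) :: real)) = (\<Sum>d=0..n. g d * real (card {p\<in>P. length p = d}))"
proof -
  have "(\<Sum>p\<in>P. g (length p)) = (\<Sum>d\<in>{0..n}. \<Sum>p\<in>{x\<in>P. length x = d}. g (length p))"
    by (rule sum.group[symmetric]) (use assms in auto)
  also have "\<dots> = (\<Sum>d=0..n. g d * real (card {p\<in>P. length p = d}))"
    by (rule sum.cong[OF refl]) simp
  finally show ?thesis .
qed

lemma pos_len_lt: "p \<in> pos T \<Longrightarrow> length p < tsize T"
proof -
  assume "p \<in> pos T"
  then obtain V where V: "subat T p = Some V" by (auto simp: pos_def)
  from at_len[OF V] tsize_pos[of V] show ?thesis by linarith
qed

lemma comp_swap:
  fixes G u :: "real fps"
  assumes u0: "u $ 0 = 0"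
  shows "(G * fps_compose (Abs_fps c) u) $ n = (\<Sum>d=0..n. c d * (G * u^d) $ n)"
proof -
  have z: "(u ^ d) $ m = 0" if "m < d" for m d
    using startsby_zero_power_prefix[OF u0] that by blast
  have "(G * fps_compose (Abs_fps c) u) $ n = (\<Sum>i=0..n. G $ i * (\<Sum>d=0..n-i. c d * (u^d) $ (n-i)))"
    by (simp add: fps_mult_nth fps_compose_nth)
  also have "\<dots> = (\<Sum>i=0..n. G $ i * (\<Sum>d=0..n. c d * (u^d) $ (n-i)))"
  proof (rule sum.cong[OF refl])
    fix i assume "i \<in> {0..n}"
    have "(\<Sum>d=0..n-i. c d * (u^d) $ (n-i)) = (\<Sum>d=0..n. c d * (u^d) $ (n-i))"
      by (rule sum.mono_neutral_left) (auto simp: z)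
    then show "G $ i * (\<Sum>d=0..n-i. c d * (u^d) $ (n-i)) = G $ i * (\<Sum>d=0..n. c d * (u^d) $ (n-i))" by simp
  qed
  also have "\<dots> = (\<Sum>i=0..n. \<Sum>d=0..n. c d * (G $ i * (u^d) $ (n-i)))"
    by (simp add: sum_distrib_left algebra_simps)
  also have "\<dots> = (\<Sum>d=0..n. \<Sum>i=0..n. c d * (G $ i * (u^d) $ (n-i)))"
    by (rule sum.swap)
  also have "\<dots> = (\<Sum>d=0..n. c d * (G * u^d) $ n)"
    by (simp add: fps_mult_nth sum_distrib_left)
  finally show ?thesis .
qed

context
  fixes \<T> :: "'a tree set"
  assumes g: "graftable \<T>" and fin: "\<And>n. finite {T\<in>\<T>. tsize T = n}" and leaf: "Node [] \<in> \<T>"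
begin

lemma wsum: "tree_gf \<T> (\<lambda>T. real (sum_list (map f (depths T)))) $ n = (\<Sum>d=0..n. real (f d) * Agf \<T> d $ n)"
proof -
  have "tree_gf \<T> (\<lambda>T. real (sum_list (map f (depths T)))) $ n
      = (\<Sum>T\<in>{T\<in>\<T>. tsize T = n}. \<Sum>p\<in>pos T. real (f (length p)))"
    unfolding tree_gf_def depths_sum by simp
  also have "\<dots> = (\<Sum>T\<in>{T\<in>\<T>. tsize T = n}. \<Sum>d=0..n. real (f d) * real (card {p\<in>pos T. length p = d}))"
  proof (rule sum.cong[OF refl])
    fix T assume "T \<in> {T\<in>\<T>. tsize T = n}"
    then have "\<forall>p\<in>pos T. length p \<le> n" using pos_len_lt by fastforce
    then show "(\<Sum>p\<in>pos T. real (f (length p))) = (\<Sum>d=0..n. real (f d) * real (card {p\<in>pos T. length p = d}))"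
      using group_len[OF finite_pos, of T n "\<lambda>d. real (f d)"] by simp
  qed
  also have "\<dots> = (\<Sum>d=0..n. \<Sum>T\<in>{T\<in>\<T>. tsize T = n}. real (f d) * real (card {p\<in>pos T. length p = d}))"
    by (rule sum.swap)
  also have "\<dots> = (\<Sum>d=0..n. real (f d) * Agf \<T> d $ n)"
    unfolding Agf_def tree_gf_def by (simp add: sum_distrib_left)
  finally show ?thesis .
qed

lemma lsum: "tree_gf \<T> (\<lambda>T. real (nleaves T)) $ n = (\<Sum>d=0..n. Bgf \<T> d $ n)"
proof -
  have "tree_gf \<T> (\<lambda>T. real (nleaves T)) $ n
      = (\<Sum>T\<in>{T\<in>\<T>. tsize T = n}. \<Sum>d=0..n. real (card {p\<in>pos T. length p = d \<and> subat T p = Some (Node [])}))"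
    unfolding tree_gf_def fps_nth_Abs_fps
  proof (rule sum.cong[OF refl])
    fix T assume "T \<in> {T\<in>\<T>. tsize T = n}"
    then have a: "\<forall>p\<in>{p\<in>pos T. subat T p = Some (Node [])}. length p \<le> n" using pos_len_lt by fastforce
    have "real (nleaves T) = (\<Sum>p\<in>{p\<in>pos T. subat T p = Some (Node [])}. (\<lambda>_. 1) (length p))"
      unfolding nleaves_card by simp
    also have "\<dots> = (\<Sum>d=0..n. 1 * real (card {p\<in>{p\<in>pos T. subat T p = Some (Node [])}. length p = d}))"
      by (rule group_len[OF finite_pos_sub a])
    also have "\<dots> = (\<Sum>d=0..n. real (card {p\<in>pos T. length p = d \<and> subat T p = Some (Node [])}))"
    proof (rule sum.cong[OF refl])
      fix d
      have "{p\<in>{p\<in>pos T. subat T p = Some (Node [])}. length p = d} = {p\<in>pos T. length p = d \<and> subat T p = Some (Node [])}"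
        by blast
      then show "1 * real (card {p\<in>{p\<in>pos T. subat T p = Some (Node [])}. length p = d}) = real (card {p\<in>pos T. length p = d \<and> subat T p = Some (Node [])})"
        by simp
    qed
    finally show "real (nleaves T) = (\<Sum>d=0..n. real (card {p\<in>pos T. length p = d \<and> subat T p = Some (Node [])}))" .
  qed
  also have "\<dots> = (\<Sum>d=0..n. \<Sum>T\<in>{T\<in>\<T>. tsize T = n}. real (card {p\<in>pos T. length p = d \<and> subat T p = Some (Node [])}))"
    by (rule sum.swap)
  also have "\<dots> = (\<Sum>d=0..n. Bgf \<T> d $ n)"
    unfolding Bgf_def tree_gf_def by simp
  finally show ?thesis .
qed

lemma Dform: "tree_gf \<T> (\<lambda>T. real (sum_list (map f (depths T))))
   = tree_gf \<T> (\<lambda>_. 1) * fps_compose (Abs_fps (\<lambda>d. real (f d))) (uu \<T>)"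
proof (rule fps_ext)
  fix n
  show "tree_gf \<T> (\<lambda>T. real (sum_list (map f (depths T)))) $ n
   = (tree_gf \<T> (\<lambda>_. 1) * fps_compose (Abs_fps (\<lambda>d. real (f d))) (uu \<T>)) $ n"
    unfolding wsum comp_swap[OF uu0[OF g fin leaf]] Aform[OF g fin leaf] ..
qed

lemma Lform: "tree_gf \<T> (\<lambda>T. real (nleaves T))
   = fps_X * fps_compose (Abs_fps (\<lambda>d. 1)) (uu \<T>)"
proof (rule fps_ext)
  fix n
  show "tree_gf \<T> (\<lambda>T. real (nleaves T)) $ n
   = (fps_X * fps_compose (Abs_fps (\<lambda>d. 1)) (uu \<T>)) $ n"
    unfolding lsum comp_swap[OF uu0[OF g fin leaf]] Bform[OF g fin leaf] by simp
qed

end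


declare Ppoly.simps [simp del]

definition pr :: "nat \<Rightarrow> real poly" where "pr k = (\<Prod>i<k. [:of_nat i, 1:])"

lemma binpoly_pr: "binpoly k = smult (1 / fact k) (pr k)"
  unfolding binpoly_def pr_def ..

lemma pr_Suc: "pr (Suc k) = pr k * [:of_nat k, 1:]"
  unfolding pr_def by (simp add: mult.commute)

lemma coeff_mult_lin: "coeff (p * [:a, 1:]) n = a * coeff p n + (if n = 0 then 0 else coeff p (n - 1))" for p :: "real poly"
proof -
  have "p * [:a, 1:] = smult a p + pCons 0 p"
    by (simp add: mult_pCons_right)
  then show ?thesis by (cases n) (simp_all add: coeff_pCons)
qed

lemma pr_coeff_high: "n > k \<Longrightarrow> coeff (pr k) n = 0"
proof (induction k arbitrary: n)
  case 0 then show ?case by (simp add: pr_def)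
next
  case (Suc k) then show ?case unfolding pr_Suc coeff_mult_lin by simp
qed

lemma pr_coeff_top: "coeff (pr k) k = 1"
proof (induction k)
  case 0 then show ?case by (simp add: pr_def)
next
  case (Suc k) then show ?case unfolding pr_Suc coeff_mult_lin by (simp add: pr_coeff_high)
qed

lemma pr_coeff_0: "k \<ge> 1 \<Longrightarrow> coeff (pr k) 0 = 0"
proof (induction k)
  case 0 then show ?case by simp
next
  case (Suc k) then show ?case by (cases k) (auto simp add: pr_Suc coeff_mult_lin pr_def)
qed

lemma pr_coeff_next: "coeff (pr (Suc k)) k = real (Suc k) * real k / 2"
proof (induction k)
  case 0 then show ?case by (simp add: pr_Suc pr_def coeff_mult_lin)
next
  case (Suc k)
  have "coeff (pr (Suc (Suc k))) (Suc k) = real (Suc k) * coeff (pr (Suc k)) (Suc k) + coeff (pr (Suc k)) k"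
    by (simp add: pr_Suc[of "Suc k"] coeff_mult_lin)
  also have "\<dots> = real (Suc k) + real (Suc k) * real k / 2" using Suc pr_coeff_top by simp
  also have "\<dots> = real (Suc (Suc k)) * real (Suc k) / 2" by (simp add: field_simps)
  finally show ?case .
qed

lemma poly_pr: "poly (pr k) x = pochhammer x k"
  unfolding pr_def pochhammer_prod by (simp add: poly_prod atLeast0LessThan add.commute)

lemma poly_binpoly: "poly (binpoly k) x = pochhammer x k / fact k"
  unfolding binpoly_pr by (simp add: poly_pr)

lemma bcoef_eq: "bcoef k j = coeff (pr k) j / fact k"
  unfolding bcoef_def binpoly_pr by simp

lemma bcoef_top: "bcoef k k = 1 / fact k"
  by (simp add: bcoef_eq pr_coeff_top)

lemma bcoef_high: "j > k \<Longrightarrow> bcoef k j = 0"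
  by (simp add: bcoef_eq pr_coeff_high)

lemma bcoef_0: "k \<ge> 1 \<Longrightarrow> bcoef k 0 = 0"
  by (simp add: bcoef_eq pr_coeff_0)

lemma bcoef_next: "k \<ge> 1 \<Longrightarrow> bcoef k (k - 1) = real k * (real k - 1) / 2 / fact k"
proof -
  assume "k \<ge> 1"
  then obtain m where k: "k = Suc m" by (cases k) auto
  show ?thesis unfolding bcoef_eq k by (simp add: pr_coeff_next field_simps)
qed

lemma degree_binpoly: "degree (binpoly k) \<le> k"
  by (rule degree_le) (simp add: bcoef_high[unfolded bcoef_def])

lemma poly_binpoly_sum: "poly (binpoly k) x = (\<Sum>j=0..k. bcoef k j * x ^ j)"
proof -
  have "poly (binpoly k) x = (\<Sum>j\<le>degree (binpoly k). bcoef k j * x ^ j)"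
    unfolding poly_altdef bcoef_def ..
  also have "\<dots> = (\<Sum>j\<le>k. bcoef k j * x ^ j)"
    by (rule sum.mono_neutral_left) (auto simp: bcoef_def coeff_eq_0 degree_binpoly)
  finally show ?thesis by (simp add: atLeast0AtMost)
qed

lemma Ppoly_eq: "k \<ge> 1 \<Longrightarrow> Ppoly k = smult (1 / bcoef k k) (monom 1 k - (\<Sum>j\<in>{1..<k}. smult (bcoef k j) (Ppoly j)))"
  by (subst Ppoly.simps) simp

lemma Ppoly_coeff: "k \<ge> 1 \<Longrightarrow> (\<forall>n>k. coeff (Ppoly k) n = 0) \<and> coeff (Ppoly k) k = fact k
    \<and> coeff (Ppoly k) (k - 1) = - fact k * real (k - 1) / 2"
proof (induction k rule: less_induct)
  case (less k)
  have IH: "\<And>j. j \<in> {1..<k} \<Longrightarrow> (\<forall>n>j. coeff (Ppoly j) n = 0) \<and> coeff (Ppoly j) j = fact j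
    \<and> coeff (Ppoly j) (j - 1) = - fact j * real (j - 1) / 2" using less by auto
  have c: "coeff (Ppoly k) n = fact k * ((if k = n then 1 else 0) - (\<Sum>j\<in>{1..<k}. bcoef k j * coeff (Ppoly j) n))" for n
    by (subst Ppoly_eq[OF less.prems]) (simp add: coeff_sum bcoef_top coeff_monom)
  have hi: "\<forall>n>k. coeff (Ppoly k) n = 0"
  proof (intro allI impI)
    fix n assume "n > k"
    then have "(\<Sum>j\<in>{1..<k}. bcoef k j * coeff (Ppoly j) n) = 0"
      using IH by (intro sum.neutral) auto
    then show "coeff (Ppoly k) n = 0" using c[of n] \<open>n > k\<close> by simp
  qed
  have top: "coeff (Ppoly k) k = fact k"
  proof -
    have "(\<Sum>j\<in>{1..<k}. bcoef k j * coeff (Ppoly j) k) = 0"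
      using IH by (intro sum.neutral) auto
    then show ?thesis using c[of k] by simp
  qed
  have nxt: "coeff (Ppoly k) (k - 1) = - fact k * real (k - 1) / 2"
  proof (cases "k = 1")
    case True then show ?thesis using c[of 0] by simp
  next
    case False
    with less.prems have k2: "k \<ge> 2" by simp
    have mem: "k - 1 \<in> {1..<k}" using k2 by auto
    have "(\<Sum>j\<in>{1..<k}. bcoef k j * coeff (Ppoly j) (k - 1))
        = bcoef k (k - 1) * coeff (Ppoly (k - 1)) (k - 1) + (\<Sum>j\<in>{1..<k} - {k - 1}. bcoef k j * coeff (Ppoly j) (k - 1))"
      by (rule sum.remove[OF _ mem]) simp
    also have "(\<Sum>j\<in>{1..<k} - {k - 1}. bcoef k j * coeff (Ppoly j) (k - 1)) = 0"
      using IH by (intro sum.neutral) auto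
    also have "coeff (Ppoly (k - 1)) (k - 1) = fact (k - 1)" using IH[OF mem] by simp
    finally have s: "(\<Sum>j\<in>{1..<k}. bcoef k j * coeff (Ppoly j) (k - 1)) = bcoef k (k - 1) * fact (k - 1)" by simp
    have f: "fact k = real k * fact (k - 1)"
      by (rule fact_reduce) (use k2 in simp)
    have C: "coeff (Ppoly k) (k - 1) = - (bcoef k (k - 1) * fact k) * fact (k - 1)"
    proof -
      have ne: "(k = k - 1) = False" using k2 by simp
      show ?thesis using c[of "k - 1"] s unfolding ne if_False by simp
    qed
    have b: "bcoef k (k - 1) * fact k = real k * (real k - 1) / 2"
      using bcoef_next[of k] k2 by simp
    have r: "real (k - 1) = real k - 1" using k2 by (simp add: of_nat_diff)
    show ?thesis unfolding C unfolding b unfolding r f by (simp add: field_simps)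
  qed
  show ?case using hi top nxt by blast
qed

lemma Ppoly_shape: "k \<ge> 1 \<Longrightarrow> \<exists>Q :: real poly.
           Ppoly k = monom (fact k) k - monom (fact k * real (k - 1) / 2) (k - 1) + Q
           \<and> (k \<ge> 2 \<longrightarrow> degree Q \<le> k - 2) \<and> (k = 1 \<longrightarrow> Q = 0)"
proof -
  assume k: "k \<ge> 1"
  define Q where "Q = Ppoly k - monom (fact k) k + monom (fact k * real (k - 1) / 2) (k - 1)"
  have cq: "coeff Q i = 0" if "i \<ge> k - 1" for i
  proof -
    have "i = k - 1 \<or> i = k \<or> i > k" using that k by auto
    then show ?thesis using Ppoly_coeff[OF k] k unfolding Q_def by (auto simp: coeff_monom)
  qed
  have "Ppoly k = monom (fact k) k - monom (fact k * real (k - 1) / 2) (k - 1) + Q"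
    unfolding Q_def by simp
  moreover have "k \<ge> 2 \<longrightarrow> degree Q \<le> k - 2"
    using cq by (auto intro!: degree_le)
  moreover have "k = 1 \<longrightarrow> Q = 0"
    using cq by (auto intro!: poly_eqI)
  ultimately show ?thesis by blast
qed


definition gk :: "nat \<Rightarrow> real fps" where "gk k = Abs_fps (\<lambda>d. poly (binpoly k) (real d))"

lemma ones_mult: "Abs_fps (\<lambda>_. 1::real) * (1 - fps_X) = 1"
  by (rule fps_ext) (simp add: algebra_simps fps_X_mult_right_nth)

lemma poch_diff: "pochhammer (x + 1) (Suc j) - pochhammer x (Suc j) = (real j + 1) * pochhammer (x + 1) j"
  for x :: real
  unfolding pochhammer_rec'[of "x+1"] pochhammer_rec[of x] by (simp add: algebra_simps)

lemma gk0: "gk 0 = Abs_fps (\<lambda>_. 1)"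
  unfolding gk_def by (simp add: poly_binpoly)

lemma gk_rec: "k \<ge> 1 \<Longrightarrow> gk k * (1 - fps_X) = gk (k - 1) - (if k = 1 then 1 else 0)"
proof (rule fps_ext)
  fix n assume k: "k \<ge> 1"
  then obtain j where kj: "k = Suc j" by (cases k) auto
  show "(gk k * (1 - fps_X)) $ n = (gk (k - 1) - (if k = 1 then 1 else 0)) $ n"
  proof (cases n)
    case 0 then show ?thesis
      using kj by (simp add: algebra_simps fps_X_mult_right_nth gk_def poly_binpoly pochhammer_0_left)
  next
    case (Suc m)
    have "(gk k * (1 - fps_X)) $ n = pochhammer (real m + 1) (Suc j) / fact (Suc j) - pochhammer (real m) (Suc j) / fact (Suc j)"
      using Suc kj by (simp add: algebra_simps fps_X_mult_right_nth gk_def poly_binpoly)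
    also have "\<dots> = (pochhammer (real m + 1) (Suc j) - pochhammer (real m) (Suc j)) / fact (Suc j)"
      by (simp add: diff_divide_distrib)
    also have "\<dots> = ((real j + 1) * pochhammer (real m + 1) j) / ((real j + 1) * fact j)"
      unfolding poch_diff by (simp add: fact_Suc algebra_simps)
    also have "\<dots> = pochhammer (real m + 1) j / fact j"
      by (rule mult_divide_mult_cancel_left) simp
    also have "\<dots> = (gk (k - 1) - (if k = 1 then 1 else 0)) $ n"
      using Suc kj by (simp add: gk_def poly_binpoly add.commute)
    finally show ?thesis .
  qed
qed

lemma gk_id1: "gk 1 * (1 - fps_X) ^ Suc 1 = fps_X"
proof -
  have r1: "gk 1 * (1 - fps_X) = gk 0 - 1" using gk_rec[of 1] by simp
  have "gk 1 * (1 - fps_X) ^ Suc 1 = (gk 1 * (1 - fps_X)) * (1 - fps_X)"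
    by (simp only: power_Suc power_one_right mult.assoc)
  also have "\<dots> = (gk 0 - 1) * (1 - fps_X)" by (simp only: r1)
  also have "\<dots> = gk 0 * (1 - fps_X) - (1 - fps_X)" by (simp only: left_diff_distrib mult_1_left)
  also have "\<dots> = 1 - (1 - fps_X)" unfolding gk0 ones_mult ..
  also have "\<dots> = fps_X" by simp
  finally show ?thesis .
qed

lemma gk_id: "k \<ge> 1 \<Longrightarrow> gk k * (1 - fps_X) ^ Suc k = fps_X"
proof (induction k)
  case 0 then show ?case by simp
next
  case (Suc k)
  show ?case
  proof (cases "k = 0")
    case True then show ?thesis using gk_id1 by simp
  next
    case False
    then have IH: "gk k * (1 - fps_X) ^ Suc k = fps_X" using Suc by simp
    have r: "gk (Suc k) * (1 - fps_X) = gk k" using gk_rec[of "Suc k"] False by simp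
    have "gk (Suc k) * (1 - fps_X) ^ Suc (Suc k) = (gk (Suc k) * (1 - fps_X)) * (1 - fps_X) ^ Suc k"
      by (simp only: power_Suc mult.assoc)
    also have "\<dots> = gk k * (1 - fps_X) ^ Suc k" by (simp only: r)
    finally show ?thesis unfolding IH .
  qed
qed

lemma comp_lin:
  fixes u :: "real fps"
  shows "fps_compose (Abs_fps (\<lambda>d. \<Sum>j\<in>J. a j * c j d)) u = (\<Sum>j\<in>J. fps_const (a j) * fps_compose (Abs_fps (c j)) u)"
proof (rule fps_ext)
  fix n
  show "fps_compose (Abs_fps (\<lambda>d. \<Sum>j\<in>J. a j * c j d)) u $ n = (\<Sum>j\<in>J. fps_const (a j) * fps_compose (Abs_fps (c j)) u) $ n"
  proof -
    have "fps_compose (Abs_fps (\<lambda>d. \<Sum>j\<in>J. a j * c j d)) u $ n = (\<Sum>i=0..n. \<Sum>j\<in>J. a j * c j i * (u ^ i) $ n)"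
      by (simp add: fps_compose_nth sum_distrib_right)
    also have "\<dots> = (\<Sum>j\<in>J. \<Sum>i=0..n. a j * c j i * (u ^ i) $ n)"
      by (rule sum.swap)
    also have "\<dots> = (\<Sum>j\<in>J. fps_const (a j) * fps_compose (Abs_fps (c j)) u) $ n"
      by (simp add: fps_compose_nth fps_sum_nth sum_distrib_left mult.assoc)
    finally show ?thesis .
  qed
qed

lemma gk_sum: "gk k = Abs_fps (\<lambda>d. \<Sum>j=0..k. bcoef k j * real d ^ j)"
  unfolding gk_def poly_binpoly_sum ..

lemma mp_add: "map_poly fps_const (p + q) = map_poly fps_const p + map_poly fps_const (q :: real poly)"
  by (rule poly_eqI) (simp add: coeff_map_poly fps_const_add)
lemma mp_diff: "map_poly fps_const (p - q) = map_poly fps_const p - map_poly fps_const (q :: real poly)"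
  by (rule poly_eqI) (simp add: coeff_map_poly fps_const_sub)
lemma mp_smult: "map_poly fps_const (smult c p) = smult (fps_const c) (map_poly fps_const (p :: real poly))"
  by (rule map_poly_smult) (simp_all add: fps_const_mult)
lemma mp_monom: "map_poly fps_const (monom (c::real) n) = monom (fps_const c) n"
  by (rule map_poly_monom) simp
lemma mp_sum: "map_poly fps_const (\<Sum>j\<in>J. f j) = (\<Sum>j\<in>J. map_poly fps_const (f j :: real poly))"
proof (induction J rule: infinite_finite_induct)
  case (infinite A) then show ?case by simp
next
  case empty then show ?case by simp
next
  case (insert x F) then show ?case by (simp add: mp_add)
qed

context
  fixes u :: "real fps"
  assumes u0: "u $ 0 = 0"
begin

definition "WW = fps_compose (Abs_fps (\<lambda>_. 1)) u"
definition "SS j = fps_compose (Abs_fps (\<lambda>d. real d ^ j)) u"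
definition "EE p = poly (map_poly fps_const p) WW"

lemma WW_inv: "WW * (1 - u) = 1"
proof -
  have "fps_compose (Abs_fps (\<lambda>_. 1::real) * (1 - fps_X)) u = 1" unfolding ones_mult by simp
  then show ?thesis unfolding WW_def
    by (simp add: fps_compose_mult_distrib[OF u0] fps_compose_sub_distrib fps_X_fps_compose_startby0[OF u0])
qed

lemma WW_minus1: "WW - 1 = u * WW"
  using WW_inv by (simp add: algebra_simps)

lemma gk_comp: "k \<ge> 1 \<Longrightarrow> fps_compose (gk k) u = u * WW ^ Suc k"
proof -
  assume k: "k \<ge> 1"
  have "fps_compose (gk k * (1 - fps_X) ^ Suc k) u = u"
    unfolding gk_id[OF k] using u0 by simp
  then have e1: "fps_compose (gk k) u * (1 - u) ^ Suc k = u"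
    by (simp add: fps_compose_mult_distrib[OF u0] fps_compose_power[OF u0, symmetric] fps_compose_sub_distrib fps_X_fps_compose_startby0[OF u0])
  have e2: "(1 - u) ^ Suc k * WW ^ Suc k = 1"
    unfolding power_mult_distrib[symmetric] mult.commute[of "1 - u" WW] WW_inv by simp
  have "fps_compose (gk k) u = fps_compose (gk k) u * ((1 - u) ^ Suc k * WW ^ Suc k)"
    unfolding e2 by simp
  also have "\<dots> = (fps_compose (gk k) u * (1 - u) ^ Suc k) * WW ^ Suc k"
    by (simp only: mult.assoc)
  also have "\<dots> = u * WW ^ Suc k" unfolding e1 ..
  finally show ?thesis .
qed

lemma gk_comp_sum: "fps_compose (gk k) u = (\<Sum>j=0..k. fps_const (bcoef k j) * SS j)"
  unfolding gk_sum comp_lin SS_def ..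

lemma EE_Ppoly: "k \<ge> 1 \<Longrightarrow> EE (Ppoly k) = fps_const (1 / bcoef k k) * (WW ^ k - (\<Sum>j\<in>{1..<k}. fps_const (bcoef k j) * EE (Ppoly j)))"
  unfolding EE_def
  by (subst Ppoly_eq) (simp_all add: mp_smult mp_diff mp_monom mp_sum poly_sum poly_monom)

lemma main_alg: "k \<ge> 1 \<Longrightarrow> SS k = (WW - 1) * EE (Ppoly k)"
proof (induction k rule: less_induct)
  case (less k)
  have IH: "\<And>j. j \<in> {1..<k} \<Longrightarrow> (WW - 1) * EE (Ppoly j) = SS j"
    using less by auto
  have "(WW - 1) * EE (Ppoly k) = fps_const (1 / bcoef k k) * ((WW - 1) * WW ^ k - (\<Sum>j\<in>{1..<k}. fps_const (bcoef k j) * ((WW - 1) * EE (Ppoly j))))"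
    unfolding EE_Ppoly[OF less.prems] by (simp add: algebra_simps sum_distrib_left)
  also have "\<dots> = fps_const (1 / bcoef k k) * (fps_compose (gk k) u - (\<Sum>j\<in>{1..<k}. fps_const (bcoef k j) * SS j))"
    unfolding gk_comp[OF less.prems] WW_minus1 using IH[unfolded WW_minus1]
    by (simp add: algebra_simps)
  also have "fps_compose (gk k) u = fps_const (bcoef k 0) * SS 0 + (\<Sum>j\<in>{1..<k}. fps_const (bcoef k j) * SS j) + fps_const (bcoef k k) * SS k"
  proof -
    have "{0..k} = insert 0 (insert k {1..<k})" using less.prems by auto
    then show ?thesis unfolding gk_comp_sum using less.prems by (simp add: algebra_simps)
  qed
  also have "fps_const (1 / bcoef k k) * (fps_const (bcoef k 0) * SS 0 + (\<Sum>j\<in>{1..<k}. fps_const (bcoef k j) * SS j) + fps_const (bcoef k k) * SS k - (\<Sum>j\<in>{1..<k}. fps_const (bcoef k j) * SS j))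
      = fps_const (1 / bcoef k k * bcoef k k) * SS k"
    using bcoef_0[OF less.prems] by (simp add: algebra_simps fps_const_mult[symmetric])
  also have "\<dots> = SS k" by (simp add: bcoef_top)
  finally show ?case ..
qed

end


theorem theorem2p2:
  fixes \<T> :: "'a tree set" and k :: nat
  assumes "graftable \<T>"
    and "\<forall>n. finite {T\<in>\<T>. tsize T = n}"
    and "\<exists>\<Phi> :: real fps. fps_nth \<Phi> 0 \<noteq> 0 \<and>
           tree_gf \<T> (\<lambda>_. 1) = fps_X * fps_compose \<Phi> (tree_gf \<T> (\<lambda>_. 1))"
    and "k \<ge> 1"
  shows "(tree_gf \<T> (\<lambda>T. real (sum_list (map (\<lambda>d. d ^ k) (depths T))))
           = (tree_gf \<T> (\<lambda>T. real (tsize T)) - tree_gf \<T> (\<lambda>_. 1))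
             * poly (map_poly fps_const (Ppoly k)) (tree_gf \<T> (\<lambda>T. real (nleaves T)) / fps_X))
         \<and> (\<exists>Q :: real poly.
           Ppoly k = monom (fact k) k - monom (fact k * real (k - 1) / 2) (k - 1) + Q
           \<and> (k \<ge> 2 \<longrightarrow> degree Q \<le> k - 2) \<and> (k = 1 \<longrightarrow> Q = 0))"
proof -
  note g = assms(1)
  have fin: "\<And>n. finite {T\<in>\<T>. tsize T = n}" using assms(2) by blast
  note k = assms(4)
  obtain \<Phi> :: "real fps" where P0: "\<Phi> $ 0 \<noteq> 0"
    and PE: "tree_gf \<T> (\<lambda>_. 1) = fps_X * fps_compose \<Phi> (tree_gf \<T> (\<lambda>_. 1))"
    using assms(3) by blast
  have ne: "\<T> \<noteq> {}"
  proof
    assume e: "\<T> = {}"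
    then have "tree_gf \<T> (\<lambda>_. 1) = 0" unfolding tree_gf_def by (simp add: fps_zero_def)
    then have "(fps_X * fps_compose \<Phi> 0) $ 1 = (0 :: real fps) $ 1" using PE by simp
    then show False using P0 by simp
  qed
  then obtain T0 where T0: "T0 \<in> \<T>" by blast
  have leaf: "Node [] \<in> \<T>"
  proof (cases T0)
    case (Node cs)
    show ?thesis using graftableD(2)[OF g T0, of "Node []"] Node by (simp add: pruned.here)
  qed
  define u where "u = uu \<T>"
  have u0: "u $ 0 = 0" unfolding u_def by (rule uu0[OF g fin leaf])
  have D: "tree_gf \<T> (\<lambda>T. real (sum_list (map (\<lambda>d. d ^ k) (depths T)))) = tree_gf \<T> (\<lambda>_. 1) * SS u k"
    unfolding SS_def[OF u0] unfolding u_def Dform[OF g fin leaf] by simp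
  have ts: "(\<lambda>T. real (tsize T)) = (\<lambda>T. real (sum_list (map (\<lambda>_. 1) (depths T))))"
    by (rule ext) (simp add: tsize_def sum_list_triv)
  have V: "tree_gf \<T> (\<lambda>T. real (tsize T)) = tree_gf \<T> (\<lambda>_. 1) * WW u"
    unfolding WW_def[OF u0] unfolding ts u_def Dform[OF g fin leaf] by simp
  have L: "tree_gf \<T> (\<lambda>T. real (nleaves T)) / fps_X = WW u"
    unfolding WW_def[OF u0] unfolding u_def Lform[OF g fin leaf] fps_divide_X
    by (subst mult.commute) (rule fps_shift_times_fps_X')
  have main: "SS u k = (WW u - 1) * EE u (Ppoly k)" by (rule main_alg[OF u0 k])
  have "tree_gf \<T> (\<lambda>T. real (sum_list (map (\<lambda>d. d ^ k) (depths T))))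
           = (tree_gf \<T> (\<lambda>T. real (tsize T)) - tree_gf \<T> (\<lambda>_. 1))
             * poly (map_poly fps_const (Ppoly k)) (tree_gf \<T> (\<lambda>T. real (nleaves T)) / fps_X)"
    unfolding D V L main EE_def[OF u0] by (simp add: algebra_simps)
  then show ?thesis using Ppoly_shape[OF k] by blast
qed


end
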